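(* Let $a<b$ with $[a,b]\subset[0,\infty)$, let $f,g:[a,b]\to\mathbb{R}$ be integrable with $0\le g(t)\le1$ for all $t\in[a,b]$ and such that $\int_a^b g(t)f'(t)\,dt$ exists. Suppose $f$ is absolutely continuous on $[a,b]$ and $|f'|^q$ is $s$-concave on $[a,b]$ for some fixed $s\in(0,1]$ and some $q>1$. Let $\lambda:=\int_a^b g(t)\,dt$. Then $$\left|\int_a^{a+\lambda} f(t)\,dt-\int_a^b f(t)g(t)\,dt\right|\le2^{(s-1)/q}\left[\lambda^2\left|f'\!\left(a+\tfrac{\lambda}{2}\right)\right|+(b-a-\lambda)^2\left|f'\!\left(\tfrac{a+b+\lambda}{2}\right)\right|\right],$$ and $$\left|\int_a^b f(t)g(t)\,dt-\int_{b-\lambda}^b f(t)\,dt\right|\le2^{(s-1)/q}\left[\lambda^2\left|f'\!\left(b-\tfrac{\lambda}{2}\right)\right|+(b-a-\lambda)^2\left|f'\!\left(\tfrac{a+b-\lambda}{2}\right)\right|\right].$$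
   Context: For fixed $s\in(0,1]$, a function $h:I\to\mathbb{R}$ on an interval $I\subset[0,\infty)$ is $s$-concave (in the second sense) if $h(\alpha x+\beta y)\ge\alpha^s h(x)+\beta^s h(y)$ for all $x,y\in I$ and all $\alpha,\beta\ge0$ with $\alpha+\beta=1$. *)

theory Defs
  imports "HOL-Analysis.Analysis"
begin

definition abs_continuous_on :: "real \<Rightarrow> real \<Rightarrow> (real \<Rightarrow> real) \<Rightarrow> bool" where
  "abs_continuous_on a b f \<longleftrightarrow>
     (\<forall>\<epsilon>>0. \<exists>\<delta>>0. \<forall>(n::nat) (u::nat \<Rightarrow> real) v.
        (\<forall>i<n. a \<le> u i \<and> u i \<le> v i \<and> v i \<le> b) \<and>
        (\<forall>i<n. \<forall>j<n. i \<noteq> j \<longrightarrow> v i \<le> u j \<or> v j \<le> u i) \<and>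
        (\<Sum>i<n. v i - u i) < \<delta>
        \<longrightarrow> (\<Sum>i<n. \<bar>f (v i) - f (u i)\<bar>) < \<epsilon>)"

definition s_concave_on :: "real \<Rightarrow> real set \<Rightarrow> (real \<Rightarrow> real) \<Rightarrow> bool" where
  "s_concave_on s I h \<longleftrightarrow>
     (\<forall>x\<in>I. \<forall>y\<in>I. \<forall>\<alpha> \<beta>. \<alpha> \<ge> 0 \<and> \<beta> \<ge> 0 \<and> \<alpha> + \<beta> = 1 \<longrightarrow>
        h (\<alpha> * x + \<beta> * y) \<ge> \<alpha> powr s * h x + \<beta> powr s * h y)"

end

theory Submission
  imports Defs
begin


lemma measure_lebesgue_Icc_aux0: "u \<le> v \<Longrightarrow> K = {u..v::real} \<Longrightarrow> v - u = measure lebesgue K"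
  by simp

definition ivl :: "real set \<Rightarrow> bool" where "ivl K \<longleftrightarrow> K = {Inf K..Sup K}"

lemma ivlD: "ivl K \<Longrightarrow> K = {Inf K..Sup K}"
  unfolding ivl_def .

lemma ivl_content: assumes "ivl K" "Inf K \<le> Sup K" shows "Henstock_Kurzweil_Integration.content K = Sup K - Inf K"
proof -
  have "Henstock_Kurzweil_Integration.content {Inf K..Sup K} = Sup K - Inf K" using assms(2) by simp
  then show ?thesis by (simp only: ivlD[OF assms(1), symmetric])
qed

lemma ivl_measure: assumes "ivl K" "Inf K \<le> Sup K" shows "Sup K - Inf K = measure lebesgue K"
proof -
  have "Sup K - Inf K = measure lebesgue {Inf K..Sup K}" using assms(2) by simp
  then show ?thesis by (simp only: ivlD[OF assms(1), symmetric])
qed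

lemma ivl_mem: assumes "ivl K" "Inf K \<le> Sup K" shows "Inf K \<in> K \<and> Sup K \<in> K"
proof -
  have "Inf K \<in> {Inf K..Sup K} \<and> Sup K \<in> {Inf K..Sup K}" using assms(2) by simp
  then show ?thesis by (simp only: ivlD[OF assms(1), symmetric])
qed

lemma ivl_memD: assumes "ivl K" "x \<in> K" shows "Inf K \<le> x \<and> x \<le> Sup K"
proof -
  have "x \<in> {Inf K..Sup K}" using assms(2) by (simp only: ivlD[OF assms(1), symmetric])
  then show ?thesis by simp
qed

lemma ac_sets:
  fixes f :: "real \<Rightarrow> real"
  assumes ac: "abs_continuous_on a b f" and e: "e > 0"
  shows "\<exists>\<delta>>0. \<forall>D. finite D \<and> (\<forall>K\<in>D. a \<le> Inf K \<and> Inf K < Sup K \<and> Sup K \<le> b \<and> ivl K) \<and>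
        (\<forall>K\<in>D. \<forall>K'\<in>D. K \<noteq> K' \<longrightarrow> interior K \<inter> interior K' = {}) \<and>
        (\<Sum>K\<in>D. Sup K - Inf K) < \<delta> \<longrightarrow> (\<Sum>K\<in>D. \<bar>f (Sup K) - f (Inf K)\<bar>) < e"
proof -
  obtain \<delta> where d: "\<delta> > 0" and H: "\<forall>(n::nat) (u::nat \<Rightarrow> real) v. (\<forall>i<n. a \<le> u i \<and> u i \<le> v i \<and> v i \<le> b) \<and>
        (\<forall>i<n. \<forall>j<n. i \<noteq> j \<longrightarrow> v i \<le> u j \<or> v j \<le> u i) \<and>
        (\<Sum>i<n. v i - u i) < \<delta>
        \<longrightarrow> (\<Sum>i<n. \<bar>f (v i) - f (u i)\<bar>) < e"
    using ac e unfolding abs_continuous_on_def by blast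
  show ?thesis
  proof (rule exI[of _ \<delta>], intro conjI allI impI)
    show "\<delta> > 0" by (rule d)
    fix D :: "real set set"
    assume A: "finite D \<and> (\<forall>K\<in>D. a \<le> Inf K \<and> Inf K < Sup K \<and> Sup K \<le> b \<and> ivl K) \<and>
        (\<forall>K\<in>D. \<forall>K'\<in>D. K \<noteq> K' \<longrightarrow> interior K \<inter> interior K' = {}) \<and>
        (\<Sum>K\<in>D. Sup K - Inf K) < \<delta>"
    note A' = A[THEN conjunct1] A[THEN conjunct2, THEN conjunct1] A[THEN conjunct2, THEN conjunct2, THEN conjunct1]
      A[THEN conjunct2, THEN conjunct2, THEN conjunct2]
    have fin: "finite D" by (rule A'(1))
    have K: "a \<le> Inf K \<and> Inf K < Sup K \<and> Sup K \<le> b \<and> ivl K" if "K \<in> D" for K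
      using A'(2) that by (rule bspec)
    have dis: "interior K \<inter> interior K' = {}" if "K \<in> D" "K' \<in> D" "K \<noteq> K'" for K K'
      using A'(3) that by blast
    have sm: "(\<Sum>K\<in>D. Sup K - Inf K) < \<delta>" by (rule A'(4))
    obtain h where h: "bij_betw h {0..<card D} D" using ex_bij_betw_nat_finite[OF fin] by blast
    define n where "n = card D"
    have hD: "h i \<in> D" if "i < n" for i using h that unfolding n_def bij_betw_def by auto
    have hinj: "h i \<noteq> h j" if "i < n" "j < n" "i \<noteq> j" for i j
      using h that unfolding n_def bij_betw_def inj_on_def by auto
    have s1: "(\<Sum>K\<in>D. Sup K - Inf K) = (\<Sum>i<n. Sup (h i) - Inf (h i))"
      using sum.reindex_bij_betw[OF h, of "\<lambda>K. Sup K - Inf K"] unfolding n_def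
      by (simp add: lessThan_atLeast0)
    have s2: "(\<Sum>K\<in>D. \<bar>f (Sup K) - f (Inf K)\<bar>) = (\<Sum>i<n. \<bar>f (Sup (h i)) - f (Inf (h i))\<bar>)"
      using sum.reindex_bij_betw[OF h, of "\<lambda>K. \<bar>f (Sup K) - f (Inf K)\<bar>"] unfolding n_def
      by (simp add: lessThan_atLeast0)
    have disj: "Sup (h i) \<le> Inf (h j) \<or> Sup (h j) \<le> Inf (h i)" if "i < n" "j < n" "i \<noteq> j" for i j
    proof (rule ccontr)
      assume nn: "\<not> ?thesis"
      let ?u = "Inf (h i)" and ?v = "Sup (h i)" and ?u' = "Inf (h j)" and ?v' = "Sup (h j)"
      have k1: "?u < ?v" "h i = {?u..?v}" using K[OF hD[OF that(1)]] by (blast, intro ivlD, blast)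
      have k2: "?u' < ?v'" "h j = {?u'..?v'}" using K[OF hD[OF that(2)]] by (blast, intro ivlD, blast)
      have e0: "interior (h i) \<inter> interior (h j) = {}" using dis[OF hD[OF that(1)] hD[OF that(2)] hinj[OF that]] .
      define z where "z = (max ?u ?u' + min ?v ?v') / 2"
      have "z \<in> interior (h i) \<inter> interior (h j)"
        apply (subst k1(2), subst k2(2)) using nn k1(1) k2(1) unfolding z_def by auto
      with e0 show False by blast
    qed
    show "(\<Sum>K\<in>D. \<bar>f (Sup K) - f (Inf K)\<bar>) < e"
      unfolding s2
      apply (rule H[rule_format])
      using K hD disj sm s1 by (auto simp: less_imp_le)
  qed
qed


lemma interval_InfSup:
  fixes u v :: real
  assumes "K = {u..v}" "K \<noteq> {}"
  shows "Inf K = u" "Sup K = v" "u \<le> v"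
  using assms by auto




lemma lip_bound:
  fixes f f' :: "real \<Rightarrow> real"
  assumes ac: "abs_continuous_on a b f" and cd: "a \<le> c" "c \<le> d" "d \<le> b" and N: "negligible N"
    and der: "\<forall>x\<in>{a..b} - N. (f has_real_derivative f' x) (at x within {a..b})"
    and bnd: "\<forall>x\<in>{c..d}. \<bar>f' x\<bar> \<le> M"
  shows "\<bar>f d - f c\<bar> \<le> M * (d - c)"
proof -
  have key: "\<bar>f d - f c\<bar> \<le> M*(d-c) + e*(d - c + 1)" if e: "e > 0" for e
  proof -
    obtain \<delta> where \<delta>: "\<delta> > 0" and ACs0: "\<forall>D. finite D \<and> (\<forall>K\<in>D. a \<le> Inf K \<and> Inf K < Sup K \<and> Sup K \<le> b \<and> ivl K) \<and>
        (\<forall>K\<in>D. \<forall>K'\<in>D. K \<noteq> K' \<longrightarrow> interior K \<inter> interior K' = {}) \<and>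
        (\<Sum>K\<in>D. Sup K - Inf K) < \<delta> \<longrightarrow> (\<Sum>K\<in>D. \<bar>f (Sup K) - f (Inf K)\<bar>) < e"
      using ac_sets[OF ac e] by blast
    have ACs: "(\<Sum>K\<in>D. \<bar>f (Sup K) - f (Inf K)\<bar>) < e"
      if P1: "finite D" and P2: "\<And>K. K \<in> D \<Longrightarrow> a \<le> Inf K \<and> Inf K < Sup K \<and> Sup K \<le> b \<and> ivl K"
        and P3: "\<And>K K'. K \<in> D \<Longrightarrow> K' \<in> D \<Longrightarrow> K \<noteq> K' \<Longrightarrow> interior K \<inter> interior K' = {}"
        and P4: "(\<Sum>K\<in>D. Sup K - Inf K) < \<delta>" for D
    proof -
      have "finite D \<and> (\<forall>K\<in>D. a \<le> Inf K \<and> Inf K < Sup K \<and> Sup K \<le> b \<and> ivl K) \<and>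
        (\<forall>K\<in>D. \<forall>K'\<in>D. K \<noteq> K' \<longrightarrow> interior K \<inter> interior K' = {}) \<and>
        (\<Sum>K\<in>D. Sup K - Inf K) < \<delta>"
        by (rule conjI, rule P1, rule conjI, rule ballI, erule P2, rule conjI, intro ballI impI, erule (2) P3, rule P4)
      then show ?thesis using ACs0 by (elim allE impE)
    qed
    define NN where "NN = N \<inter> {c..d}"
    have negN: "negligible NN" unfolding NN_def using N negligible_subset by blast
    then have NNs: "NN \<in> sets lebesgue" by (simp add: negligible_imp_sets)
    obtain U where U: "open U" "NN \<subseteq> U" "(U - NN) \<in> lmeasurable" "emeasure lebesgue (U - NN) < ennreal \<delta>"
      using sets_lebesgue_outer_open[OF NNs \<delta>] by blast
    have NNnull: "NN \<in> null_sets lebesgue" using negN negligible_iff_null_sets by blast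
    have NNlm: "NN \<in> lmeasurable" using negN negligible_imp_measurable by blast
    have Ueq: "U = (U - NN) \<union> NN" using U(2) by auto
    have Ulm: "U \<in> lmeasurable" using fmeasurable.Un[OF U(3) NNlm] by (simp only: Ueq[symmetric])
    have "measure lebesgue (U - NN) < \<delta>"
      using U(4) emeasure_eq_measure2[OF U(3)] \<delta> by (simp add: ennreal_less_iff)
    moreover have "measure lebesgue (U - NN) = measure lebesgue U"
      using measure_Diff_null_set[OF fmeasurableD[OF Ulm] NNnull] .
    ultimately have mU: "measure lebesgue U < \<delta>" by simp
    have rex: "\<forall>x\<in>{c..d} - N. \<exists>r>0. \<forall>y\<in>{a..b}. \<bar>y - x\<bar> < r \<longrightarrow> \<bar>f y - f x - f' x * (y - x)\<bar> \<le> e * \<bar>y - x\<bar>"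
    proof
      fix x assume x: "x \<in> {c..d} - N"
      then have "x \<in> {a..b} - N" using cd by auto
      then have "(f has_derivative (*) (f' x)) (at x within {a..b})"
        using der has_field_derivative_def by blast
      then show "\<exists>r>0. \<forall>y\<in>{a..b}. \<bar>y - x\<bar> < r \<longrightarrow> \<bar>f y - f x - f' x * (y - x)\<bar> \<le> e * \<bar>y - x\<bar>"
        unfolding has_derivative_within_alt using e by (simp add: real_norm_def)
    qed
    obtain r where r: "\<And>x. x\<in>{c..d} - N \<Longrightarrow> r x > 0 \<and> (\<forall>y\<in>{a..b}. \<bar>y - x\<bar> < r x \<longrightarrow> \<bar>f y - f x - f' x * (y - x)\<bar> \<le> e * \<bar>y - x\<bar>)"
      using bchoice[OF rex] by blast
    define \<gamma> where "\<gamma> x = (if x \<in> NN then U else if x \<in> {c..d} then ball x (r x) else UNIV)" for x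
    have gauge: "gauge \<gamma>"
      unfolding gauge_def
    proof
      fix x show "x \<in> \<gamma> x \<and> open (\<gamma> x)"
      proof (cases "x \<in> NN")
        case True then show ?thesis using U(1,2) unfolding \<gamma>_def by auto
      next
        case False
        show ?thesis
        proof (cases "x \<in> {c..d}")
          case True
          then have "x \<in> {c..d} - N" using False unfolding NN_def by auto
          then have "r x > 0" using r by blast
          then show ?thesis using False True unfolding \<gamma>_def by auto
        qed (use False in \<open>auto simp: \<gamma>_def\<close>)
      qed
    qed
    obtain p where p: "p tagged_division_of {c..d}" "\<gamma> fine p"
      using fine_division_exists_real[OF gauge] by blast
    define D where "D = snd ` p"
    have Ddiv: "D division_of {c..d}" unfolding D_def using division_of_tagged_division[OF p(1)] .
    have finD: "finite D" using Ddiv by auto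
    define t where "t K = (SOME x. (x,K) \<in> p)" for K
    have tp: "(t K, K) \<in> p" if "K \<in> D" for K
      using that unfolding D_def t_def by (auto intro: someI)
    have tK: "t K \<in> K" "K \<subseteq> \<gamma> (t K)" "K \<subseteq> {c..d}" "\<exists>u v. K = {u..v}" if "K \<in> D" for K
      using tagged_division_ofD(2-4)[OF p(1) tp[OF that]] p(2) tp[OF that] unfolding fine_def by auto
    have Kiv: "ivl K" "Inf K \<le> Sup K" "c \<le> Inf K" "Sup K \<le> d" if KD0: "K \<in> D" for K
    proof -
      obtain u v where uv: "K = {u..v}" using tK(4)[OF KD0] by blast
      have ne: "K \<noteq> {}" using tK(1)[OF KD0] by blast
      show "Inf K \<le> Sup K" using interval_InfSup[OF uv ne] by auto
      show "ivl K" unfolding ivl_def using interval_InfSup[OF uv ne] uv by simp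
      show "c \<le> Inf K" "Sup K \<le> d" using interval_InfSup[OF uv ne] uv tK(3)[OF KD0] ne by auto
    qed
    have tele: "f d - f c = (\<Sum>K\<in>D. f (Sup K) - f (Inf K))"
    proof -
      have "f d - f c = (\<Sum>(x,K)\<in>p. f (Sup K) - f (Inf K))"
        by (rule additive_tagged_division_1[OF cd(2) p(1), symmetric])
      also have "\<dots> = (\<Sum>(x,K)\<in>p. (\<lambda>K. if K = {} then 0 else f (Sup K) - f (Inf K)) K)"
        using tagged_division_ofD(2)[OF p(1)] by (intro sum.cong) fastforce+
      also have "\<dots> = (\<Sum>K\<in>D. (if K = {} then 0 else f (Sup K) - f (Inf K)))"
        unfolding D_def
        by (rule sum.over_tagged_division_lemma[OF p(1)]) (auto simp: box_real)
      also have "\<dots> = (\<Sum>K\<in>D. f (Sup K) - f (Inf K))"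
        using Ddiv by (intro sum.cong) auto
      finally show ?thesis .
    qed
    define D1 where "D1 = {K\<in>D. t K \<in> N}"
    define D2 where "D2 = D - D1"
    have D12: "D = D1 \<union> D2" "D1 \<inter> D2 = {}" "finite D1" "finite D2" using finD unfolding D1_def D2_def by auto
    have lenD: "(\<Sum>K\<in>D. Sup K - Inf K) = d - c"
    proof -
      have "(\<Sum>K\<in>D. Sup K - Inf K) = (\<Sum>K\<in>D. Henstock_Kurzweil_Integration.content K)"
        by (intro sum.cong refl) (metis Kiv(1,2) ivl_content)
      also have "\<dots> = Henstock_Kurzweil_Integration.content (cbox c d)" using additive_content_division Ddiv by (metis box_real(2))
      finally show ?thesis using cd by simp
    qed
    have bD2: "\<bar>f (Sup K) - f (Inf K)\<bar> \<le> (M + e) * (Sup K - Inf K)" if K: "K \<in> D2" for K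
    proof -
      have KD: "K \<in> D" using K D2_def by auto
      let ?x = "t K" and ?u = "Inf K" and ?v = "Sup K"
      have xK: "?x \<in> K" using tK(1)[OF KD] .
      have xN: "?x \<notin> N" using K unfolding D2_def D1_def by auto
      have xcd: "?x \<in> {c..d}" using xK tK(3)[OF KD] by auto
      have gx: "\<gamma> ?x = ball ?x (r ?x)" using xN xcd unfolding \<gamma>_def NN_def by auto
      have uK: "?u \<in> K" and vK: "?v \<in> K" using ivl_mem Kiv(1,2)[OF KD] by blast+
      have ub: "\<bar>?u - ?x\<bar> < r ?x" using tK(2)[OF KD] uK gx by (auto simp: dist_real_def)
      have vb: "\<bar>?v - ?x\<bar> < r ?x" using tK(2)[OF KD] vK gx by (auto simp: dist_real_def)
      have uab: "?u \<in> {a..b}" and vab: "?v \<in> {a..b}" using Kiv[OF KD] cd by auto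
      have rx: "\<forall>y\<in>{a..b}. \<bar>y - ?x\<bar> < r ?x \<longrightarrow> \<bar>f y - f ?x - f' ?x * (y - ?x)\<bar> \<le> e * \<bar>y - ?x\<bar>"
        using r xN xcd by blast
      have i1: "\<bar>f ?u - f ?x - f' ?x * (?u - ?x)\<bar> \<le> e * \<bar>?u - ?x\<bar>" using rx uab ub by blast
      have i2: "\<bar>f ?v - f ?x - f' ?x * (?v - ?x)\<bar> \<le> e * \<bar>?v - ?x\<bar>" using rx vab vb by blast
      have ux: "?u \<le> ?x" "?x \<le> ?v" using ivl_memD[OF Kiv(1)[OF KD] xK] by blast+
      have fx: "\<bar>f' ?x\<bar> \<le> M" using bnd xcd by blast
      have "\<bar>f' ?x * (?u - ?x)\<bar> \<le> M * (?x - ?u)" using fx ux by (simp add: abs_mult mult_right_mono)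
      moreover have "\<bar>f' ?x * (?v - ?x)\<bar> \<le> M * (?v - ?x)" using fx ux by (simp add: abs_mult mult_right_mono)
      ultimately show ?thesis using i1 i2 ux by (auto simp: algebra_simps abs_if split: if_splits)
    qed
    have sD2: "(\<Sum>K\<in>D2. \<bar>f (Sup K) - f (Inf K)\<bar>) \<le> (M + e) * (d - c)"
    proof -
      have "(\<Sum>K\<in>D2. \<bar>f (Sup K) - f (Inf K)\<bar>) \<le> (\<Sum>K\<in>D2. (M + e) * (Sup K - Inf K))"
        by (rule sum_mono) (rule bD2)
      also have "\<dots> = (M + e) * (\<Sum>K\<in>D2. Sup K - Inf K)" by (simp add: sum_distrib_left)
      also have "\<dots> \<le> (M + e) * (\<Sum>K\<in>D. Sup K - Inf K)"
      proof (rule mult_left_mono)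
        show "(\<Sum>K\<in>D2. Sup K - Inf K) \<le> (\<Sum>K\<in>D. Sup K - Inf K)"
          using D12 Kiv(2) by (intro sum_mono2) auto
        have "\<bar>f' c\<bar> \<le> M" using bnd cd by auto
        then show "0 \<le> M + e" using e by linarith
      qed
      finally show ?thesis using lenD by simp
    qed
    define D1' where "D1' = {K\<in>D1. Inf K < Sup K}"
    have sD1: "(\<Sum>K\<in>D1. \<bar>f (Sup K) - f (Inf K)\<bar>) < e"
    proof -
      have eqs: "(\<Sum>K\<in>D1. \<bar>f (Sup K) - f (Inf K)\<bar>) = (\<Sum>K\<in>D1'. \<bar>f (Sup K) - f (Inf K)\<bar>)"
      proof (rule sum.mono_neutral_right)
        show "finite D1" using D12 by blast
        show "D1' \<subseteq> D1" unfolding D1'_def by blast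
        show "\<forall>K\<in>D1 - D1'. \<bar>f (Sup K) - f (Inf K)\<bar> = 0"
        proof
          fix K assume K: "K \<in> D1 - D1'"
          then have "K \<in> D" "\<not> Inf K < Sup K" unfolding D1'_def D1_def by auto
          then have "Inf K = Sup K" using Kiv(2) by force
          then show "\<bar>f (Sup K) - f (Inf K)\<bar> = 0" by simp
        qed
      qed
      have D1div: "D1 division_of \<Union>D1"
        using division_of_subset[of D D1] Ddiv D1_def division_ofD(6)[OF Ddiv] by auto
      have sub: "\<Union>D1 \<subseteq> U"
      proof
        fix y assume "y \<in> \<Union>D1"
        then obtain K where K: "K \<in> D1" "y \<in> K" by blast
        then have KD: "K \<in> D" and tN: "t K \<in> N" unfolding D1_def by auto
        have "t K \<in> NN" using tN tK(1,3)[OF KD] unfolding NN_def by auto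
        then show "y \<in> U" using tK(2)[OF KD] K unfolding \<gamma>_def by auto
      qed
      have "(\<Sum>K\<in>D1'. Sup K - Inf K) \<le> (\<Sum>K\<in>D1. Sup K - Inf K)"
        using D12 Kiv(2) unfolding D1'_def D1_def by (intro sum_mono2) auto
      also have "\<dots> = (\<Sum>K\<in>D1. measure lebesgue K)"
        using Kiv unfolding D1_def by (intro sum.cong refl) (metis (no_types, lifting) mem_Collect_eq ivl_measure)
      also have "\<dots> = measure lebesgue (\<Union>D1)" using content_division[OF D1div] .
      also have "\<dots> \<le> measure lebesgue U"
        using measure_mono_fmeasurable[OF sub _ Ulm] lmeasurable_division[OF D1div] by blast
      finally have "(\<Sum>K\<in>D1'. Sup K - Inf K) < \<delta>" using mU by linarith
      then have "(\<Sum>K\<in>D1'. \<bar>f (Sup K) - f (Inf K)\<bar>) < e"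
      proof (rule ACs[rotated 3])
        show "finite D1'" using D12 unfolding D1'_def by auto
        show "a \<le> Inf K \<and> Inf K < Sup K \<and> Sup K \<le> b \<and> ivl K" if "K \<in> D1'" for K
          using that Kiv[of K] cd unfolding D1'_def D1_def by auto
        show "interior K \<inter> interior K' = {}" if "K \<in> D1'" "K' \<in> D1'" "K \<noteq> K'" for K K'
          using that division_ofD(5)[OF Ddiv] unfolding D1'_def D1_def by auto
      qed
      then show ?thesis using eqs by simp
    qed
    have "\<bar>f d - f c\<bar> \<le> (\<Sum>K\<in>D. \<bar>f (Sup K) - f (Inf K)\<bar>)" unfolding tele by (rule sum_abs)
    also have "\<dots> = (\<Sum>K\<in>D1. \<bar>f (Sup K) - f (Inf K)\<bar>) + (\<Sum>K\<in>D2. \<bar>f (Sup K) - f (Inf K)\<bar>)"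
      using D12 by (simp add: sum.union_disjoint)
    finally show ?thesis using sD1 sD2 by (simp add: algebra_simps)
  qed
  show ?thesis
  proof (rule ccontr)
    assume "\<not> ?thesis"
    then have gt: "\<bar>f d - f c\<bar> - M * (d - c) > 0" by simp
    define e where "e = (\<bar>f d - f c\<bar> - M * (d - c)) / (2 * (d - c + 1))"
    have e0: "e > 0" unfolding e_def using gt cd by simp
    have "e * (d - c + 1) = (\<bar>f d - f c\<bar> - M * (d - c)) / 2" unfolding e_def using cd by (simp add: field_simps)
    then show False using key[OF e0] gt by argo
  qed
qed



lemma integral_ramp1:
  fixes L m a :: real assumes "a \<le> m"
  shows "integral {a..m} (\<lambda>t. L * (m - t)) = L * (m - a)^2 / 2"
proof -
  have D: "((\<lambda>t. - L * (m - t)^2 / 2) has_vector_derivative L * (m - x)) (at x within {a..m})" if "x \<in> {a..m}" for x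
  proof -
    have "((\<lambda>t. - L * (m - t)^2 / 2) has_real_derivative L * (m - x)) (at x within {a..m})"
      by (auto intro!: derivative_eq_intros simp: field_simps)
    then show "((\<lambda>t. - L * (m - t)^2 / 2) has_vector_derivative L * (m - x)) (at x within {a..m})"
      by (simp add: has_real_derivative_iff_has_vector_derivative)
  qed
  have "((\<lambda>t. L * (m - t)) has_integral ((\<lambda>t. - L * (m - t)^2 / 2) m - (\<lambda>t. - L * (m - t)^2 / 2) a)) {a..m}"
    by (rule fundamental_theorem_of_calculus[OF assms D])
  then have "((\<lambda>t. L * (m - t)) has_integral (L * (m - a)^2 / 2)) {a..m}" by simp
  then show ?thesis by (rule integral_unique)
qed

lemma integral_ramp2:
  fixes L m b :: real assumes "m \<le> b"
  shows "integral {m..b} (\<lambda>t. L * (t - m)) = L * (b - m)^2 / 2"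
proof -
  have D: "((\<lambda>t. L * (t - m)^2 / 2) has_vector_derivative L * (x - m)) (at x within {m..b})" if "x \<in> {m..b}" for x
  proof -
    have "((\<lambda>t. L * (t - m)^2 / 2) has_real_derivative L * (x - m)) (at x within {m..b})"
      by (auto intro!: derivative_eq_intros simp: field_simps)
    then show "((\<lambda>t. L * (t - m)^2 / 2) has_vector_derivative L * (x - m)) (at x within {m..b})"
      by (simp add: has_real_derivative_iff_has_vector_derivative)
  qed
  have "((\<lambda>t. L * (t - m)) has_integral ((\<lambda>t. L * (t - m)^2 / 2) b - (\<lambda>t. L * (t - m)^2 / 2) m)) {m..b}"
    by (rule fundamental_theorem_of_calculus[OF assms D])
  then have "((\<lambda>t. L * (t - m)) has_integral (L * (b - m)^2 / 2)) {m..b}" by simp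
  then show ?thesis by (rule integral_unique)
qed

lemma int_bound:
  fixes f w :: "real \<Rightarrow> real"
  assumes am: "a \<le> m" "m \<le> b" and fc: "continuous_on {a..b} f" and wi: "w integrable_on {a..b}"
   and wb: "\<forall>t\<in>{a..b}. \<bar>w t\<bar> \<le> 1"
   and L1: "\<forall>t\<in>{a..m}. \<bar>f t - f m\<bar> \<le> L1 * (m - t)"
   and L2: "\<forall>t\<in>{m..b}. \<bar>f t - f m\<bar> \<le> L2 * (t - m)"
  shows "\<bar>integral {a..b} (\<lambda>t. (f t - f m) * w t)\<bar> \<le> L1 * (m - a)^2 / 2 + L2 * (b - m)^2 / 2"
proof -
  let ?F = "\<lambda>t. (f t - f m) * w t"
  have wabs: "w absolutely_integrable_on {a..b}"
    by (rule absolutely_integrable_integrable_bound[of _ _ "\<lambda>_. 1"]) (use wb wi in auto)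
  have fc': "continuous_on {a..b} (\<lambda>t. f t - f m)" by (intro continuous_intros fc)
  have "?F absolutely_integrable_on {a..b}"
  proof (rule absolutely_integrable_bounded_measurable_product_real)
    show "(\<lambda>t. f t - f m) \<in> borel_measurable (lebesgue_on {a..b})"
      by (rule continuous_imp_measurable_on_sets_lebesgue[OF fc']) simp
    show "{a..b} \<in> sets lebesgue" by simp
    show "bounded ((\<lambda>t. f t - f m) ` {a..b})"
      by (rule compact_imp_bounded, rule compact_continuous_image[OF fc']) simp
  qed (rule wabs)
  then have Fi: "?F integrable_on {a..b}" using absolutely_integrable_on_def by blast
  have Fi1: "?F integrable_on {a..m}" by (rule integrable_subinterval_real[OF Fi]) (use am in auto)
  have Fi2: "?F integrable_on {m..b}" by (rule integrable_subinterval_real[OF Fi]) (use am in auto)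
  have I1: "\<bar>integral {a..m} ?F\<bar> \<le> L1 * (m - a)^2 / 2"
  proof -
    have "norm (integral {a..m} ?F) \<le> integral {a..m} (\<lambda>t. L1 * (m - t))"
    proof (rule integral_norm_bound_integral[OF Fi1])
      show "(\<lambda>t. L1 * (m - t)) integrable_on {a..m}" by (intro integrable_continuous_real continuous_intros)
      show "norm (?F t) \<le> L1 * (m - t)" if "t \<in> {a..m}" for t
      proof -
        have t: "t \<in> {a..b}" using that am by auto
        have nn: "0 \<le> L1 * (m - t)" by (rule order_trans[OF abs_ge_zero]) (use L1 that in blast)
        have "norm (?F t) = \<bar>f t - f m\<bar> * \<bar>w t\<bar>" by (simp add: abs_mult)
        also have "\<dots> \<le> (L1 * (m - t)) * 1"
          by (rule mult_mono) (use L1 that wb t nn in auto)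
        finally show ?thesis by simp
      qed
    qed
    then show ?thesis using integral_ramp1[OF am(1), of L1] by (simp only: real_norm_def)
  qed
  have I2: "\<bar>integral {m..b} ?F\<bar> \<le> L2 * (b - m)^2 / 2"
  proof -
    have "norm (integral {m..b} ?F) \<le> integral {m..b} (\<lambda>t. L2 * (t - m))"
    proof (rule integral_norm_bound_integral[OF Fi2])
      show "(\<lambda>t. L2 * (t - m)) integrable_on {m..b}" by (intro integrable_continuous_real continuous_intros)
      show "norm (?F t) \<le> L2 * (t - m)" if "t \<in> {m..b}" for t
      proof -
        have t: "t \<in> {a..b}" using that am by auto
        have nn: "0 \<le> L2 * (t - m)" by (rule order_trans[OF abs_ge_zero]) (use L2 that in blast)
        have "norm (?F t) = \<bar>f t - f m\<bar> * \<bar>w t\<bar>" by (simp add: abs_mult)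
        also have "\<dots> \<le> (L2 * (t - m)) * 1"
          by (rule mult_mono) (use L2 that wb t nn in auto)
        finally show ?thesis by simp
      qed
    qed
    then show ?thesis using integral_ramp2[OF am(2), of L2] by (simp only: real_norm_def)
  qed
  have "integral {a..b} ?F = integral {a..m} ?F + integral {m..b} ?F"
    using Henstock_Kurzweil_Integration.integral_combine[OF am Fi] by simp
  then show ?thesis using I1 I2 by linarith
qed



lemma fprime_bound:
  fixes f' :: "real \<Rightarrow> real"
  assumes conc: "s_concave_on s {a..b} (\<lambda>t. \<bar>f' t\<bar> powr q)" and q: "q > 0"
    and ce: "a \<le> c" "c \<le> t" "t \<le> e" "e \<le> b" and p: "p = (c + e) / 2"
  shows "\<bar>f' t\<bar> \<le> 2 powr (s / q) * \<bar>f' p\<bar>"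
proof -
  define t' where "t' = c + e - t"
  have tab: "t \<in> {a..b}" and t'ab: "t' \<in> {a..b}" using ce unfolding t'_def by auto
  have mid: "(1/2) * t + (1/2) * t' = p" unfolding t'_def p by (simp add: field_simps)
  have "\<bar>f' ((1/2) * t + (1/2) * t')\<bar> powr q \<ge> (1/2) powr s * \<bar>f' t\<bar> powr q + (1/2) powr s * \<bar>f' t'\<bar> powr q"
    using conc[unfolded s_concave_on_def, rule_format, OF tab t'ab, of "1/2" "1/2"] by simp
  then have h: "\<bar>f' p\<bar> powr q \<ge> (1/2) powr s * \<bar>f' t\<bar> powr q + (1/2) powr s * \<bar>f' t'\<bar> powr q"
    by (simp only: mid)
  have nn: "0 \<le> (1/2) powr s * \<bar>f' t'\<bar> powr q" by simp
  have h2: "(1/2) powr s * \<bar>f' t\<bar> powr q \<le> \<bar>f' p\<bar> powr q" using h nn by linarith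
  have half: "(1/2::real) powr s = 1 / 2 powr s" by (simp add: powr_divide)
  have pos: "2 powr s > (0::real)" by simp
  have h3: "\<bar>f' t\<bar> powr q \<le> 2 powr s * \<bar>f' p\<bar> powr q"
    using h2 pos unfolding half by (simp add: field_simps)
  have "\<bar>f' t\<bar> = (\<bar>f' t\<bar> powr q) powr (1/q)" using q by (simp add: powr_powr)
  also have "\<dots> \<le> (2 powr s * \<bar>f' p\<bar> powr q) powr (1/q)"
    by (rule powr_mono2) (use q h3 in auto)
  also have "\<dots> = 2 powr (s / q) * \<bar>f' p\<bar>"
    using q by (simp add: powr_mult powr_powr)
  finally show ?thesis .
qed

lemma ac_cont:
  fixes f :: "real \<Rightarrow> real"
  assumes ac: "abs_continuous_on a b f"
  shows "continuous_on {a..b} f"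
  unfolding continuous_on_iff
proof (intro ballI allI impI)
  fix x e :: real assume x: "x \<in> {a..b}" and e: "e > 0"
  obtain \<delta> where d: "\<delta> > 0" and H: "\<forall>(n::nat) (u::nat \<Rightarrow> real) v. (\<forall>i<n. a \<le> u i \<and> u i \<le> v i \<and> v i \<le> b) \<and>
        (\<forall>i<n. \<forall>j<n. i \<noteq> j \<longrightarrow> v i \<le> u j \<or> v j \<le> u i) \<and>
        (\<Sum>i<n. v i - u i) < \<delta>
        \<longrightarrow> (\<Sum>i<n. \<bar>f (v i) - f (u i)\<bar>) < e"
    using ac e unfolding abs_continuous_on_def by blast
  show "\<exists>d>0. \<forall>x'\<in>{a..b}. dist x' x < d \<longrightarrow> dist (f x') (f x) < e"
  proof (intro exI conjI ballI impI)
    show "\<delta> > 0" by (rule d)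
    fix y assume y: "y \<in> {a..b}" and dy: "dist y x < \<delta>"
    have mm: "min x y \<le> max x y \<and> max x y - min x y < \<delta>" using dy by (auto simp: dist_real_def max_def min_def)
    have "\<bar>f (max x y) - f (min x y)\<bar> < e"
      using H[rule_format, of 1 "\<lambda>_. min x y" "\<lambda>_. max x y"] x y mm
      by (auto simp: card_lessThan)
    then show "dist (f y) (f x) < e"
      by (cases "x \<le> y") (auto simp: dist_real_def max_def min_def abs_minus_commute)
  qed
qed

lemma ind_facts:
  fixes f :: "real \<Rightarrow> real"
  assumes "a \<le> c" "c \<le> d" "d \<le> b" and fc: "continuous_on {a..b} f"
  shows "(\<lambda>t. f t * (if t \<in> {c..d} then 1 else 0)) integrable_on {a..b}"
    "integral {a..b} (\<lambda>t. f t * (if t \<in> {c..d} then 1 else 0)) = integral {c..d} f"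
proof -
  have eq: "(\<lambda>t. f t * (if t \<in> {c..d} then 1 else 0)) = (\<lambda>t. if t \<in> {c..d} then f t else 0)"
    by auto
  have I: "{c..d} \<inter> {a..b} = {c..d}" using assms by auto
  have fi: "f integrable_on {c..d}"
    by (rule integrable_continuous_real, rule continuous_on_subset[OF fc]) (use assms in auto)
  show "(\<lambda>t. f t * (if t \<in> {c..d} then 1 else 0)) integrable_on {a..b}"
    unfolding eq integrable_restrict_Int I by (rule fi)
  show "integral {a..b} (\<lambda>t. f t * (if t \<in> {c..d} then 1 else 0)) = integral {c..d} f"
    unfolding eq integral_restrict_Int I ..
qed

lemma combine_int:
  fixes f P Q :: "real \<Rightarrow> real"
  assumes fP: "(\<lambda>t. f t * P t) integrable_on S" and fQ: "(\<lambda>t. f t * Q t) integrable_on S"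
    and Pi: "P integrable_on S" and Qi: "Q integrable_on S"
  shows "integral S (\<lambda>t. (f t - f m) * (P t - Q t)) =
     integral S (\<lambda>t. f t * P t) - integral S (\<lambda>t. f t * Q t) - f m * (integral S P - integral S Q)"
proof -
  have eq: "(\<lambda>t. (f t - f m) * (P t - Q t)) = (\<lambda>t. (f t * P t - f t * Q t) - f m * (P t - Q t))"
    by (auto simp: algebra_simps)
  have i1: "(\<lambda>t. f t * P t - f t * Q t) integrable_on S" by (rule integrable_diff[OF fP fQ])
  have i2: "(\<lambda>t. P t - Q t) integrable_on S" by (rule integrable_diff[OF Pi Qi])
  have i3: "(\<lambda>t. f m * (P t - Q t)) integrable_on S" by (rule integrable_on_mult_right[OF i2])
  show ?thesis unfolding eq
    by (simp add: integral_diff[OF i1 i3] integral_diff[OF fP fQ] integral_mult_right integral_diff[OF Pi Qi])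
qed



lemma prod_int:
  fixes f w :: "real \<Rightarrow> real"
  assumes fc: "continuous_on {a..b} f" and wi: "w integrable_on {a..b}" and wb: "\<forall>t\<in>{a..b}. \<bar>w t\<bar> \<le> 1"
  shows "(\<lambda>t. f t * w t) integrable_on {a..b}"
proof -
  have wabs: "w absolutely_integrable_on {a..b}"
    by (rule absolutely_integrable_integrable_bound[of _ _ "\<lambda>_. 1"]) (use wb wi in auto)
  have "(\<lambda>t. f t * w t) absolutely_integrable_on {a..b}"
  proof (rule absolutely_integrable_bounded_measurable_product_real)
    show "f \<in> borel_measurable (lebesgue_on {a..b})"
      by (rule continuous_imp_measurable_on_sets_lebesgue[OF fc]) simp
    show "{a..b} \<in> sets lebesgue" by simp
    show "bounded (f ` {a..b})"
      by (rule compact_imp_bounded, rule compact_continuous_image[OF fc]) simp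
  qed (rule wabs)
  then show ?thesis using absolutely_integrable_on_def by blast
qed

theorem theorem2p7:
  fixes a b s q :: real and f f' g :: "real \<Rightarrow> real"
  assumes ab: "0 \<le> a" "a < b"
    and f_int: "f integrable_on {a..b}"
    and g_int: "g integrable_on {a..b}"
    and g_bounds: "\<forall>t\<in>{a..b}. 0 \<le> g t \<and> g t \<le> 1"
    and f_ac: "abs_continuous_on a b f"
    and f'_deriv: "\<exists>N. negligible N \<and>
                     (\<forall>x\<in>{a..b} - N. (f has_real_derivative f' x) (at x within {a..b}))"
    and gf'_int: "(\<lambda>t. g t * f' t) integrable_on {a..b}"
    and s: "0 < s" "s \<le> 1"
    and q: "q > 1"
    and conc: "s_concave_on s {a..b} (\<lambda>t. \<bar>f' t\<bar> powr q)"
  defines "lam \<equiv> integral {a..b} g"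
  shows "(\<bar>integral {a..a+lam} f - integral {a..b} (\<lambda>t. f t * g t)\<bar>
           \<le> 2 powr ((s - 1) / q) *
              (lam\<^sup>2 * \<bar>f' (a + lam / 2)\<bar> + (b - a - lam)\<^sup>2 * \<bar>f' ((a + b + lam) / 2)\<bar>)) \<and>
         (\<bar>integral {a..b} (\<lambda>t. f t * g t) - integral {b-lam..b} f\<bar>
           \<le> 2 powr ((s - 1) / q) *
              (lam\<^sup>2 * \<bar>f' (b - lam / 2)\<bar> + (b - a - lam)\<^sup>2 * \<bar>f' ((a + b - lam) / 2)\<bar>))"
proof -
  obtain N where N: "negligible N" and der: "\<forall>x\<in>{a..b} - N. (f has_real_derivative f' x) (at x within {a..b})"
    using f'_deriv by blast
  have q0: "q > 0" using q by simp
  have fc: "continuous_on {a..b} f" by (rule ac_cont[OF f_ac])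
  have lam0: "0 \<le> lam" unfolding lam_def by (rule integral_nonneg[OF g_int]) (use g_bounds in auto)
  have "lam \<le> integral {a..b} (\<lambda>_. 1::real)" unfolding lam_def
    by (rule integral_le[OF g_int]) (use g_bounds in auto)
  then have lamb: "lam \<le> b - a" using ab by simp
  define K where "K = (2::real) powr (s / q)"
  define C where "C = (2::real) powr ((s - 1) / q)"
  have lipR: "\<bar>f e - f t\<bar> \<le> K * \<bar>f' p\<bar> * (e - t)"
    if "a \<le> c" "c \<le> t" "t \<le> e" "e \<le> b" "p = (c + e) / 2" for c e p t
  proof -
    have "\<bar>f e - f t\<bar> \<le> (K * \<bar>f' p\<bar>) * (e - t)"
    proof (rule lip_bound[OF f_ac _ _ _ N der])
      show "\<forall>x\<in>{t..e}. \<bar>f' x\<bar> \<le> K * \<bar>f' p\<bar>"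
      proof
        fix x assume x: "x \<in> {t..e}"
        have cx: "c \<le> x" "x \<le> e" using x that by auto
        show "\<bar>f' x\<bar> \<le> K * \<bar>f' p\<bar>"
          unfolding K_def by (rule fprime_bound[OF conc q0 that(1) cx that(4) that(5)])
      qed
    qed (use that in auto)
    then show ?thesis by simp
  qed
  have lipL: "\<bar>f t - f c\<bar> \<le> K * \<bar>f' p\<bar> * (t - c)"
    if "a \<le> c" "c \<le> t" "t \<le> e" "e \<le> b" "p = (c + e) / 2" for c e p t
  proof -
    have "\<bar>f t - f c\<bar> \<le> (K * \<bar>f' p\<bar>) * (t - c)"
    proof (rule lip_bound[OF f_ac _ _ _ N der])
      show "\<forall>x\<in>{c..t}. \<bar>f' x\<bar> \<le> K * \<bar>f' p\<bar>"
      proof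
        fix x assume x: "x \<in> {c..t}"
        have cx: "c \<le> x" "x \<le> e" using x that by auto
        show "\<bar>f' x\<bar> \<le> K * \<bar>f' p\<bar>"
          unfolding K_def by (rule fprime_bound[OF conc q0 that(1) cx that(4) that(5)])
      qed
    qed (use that in auto)
    then show ?thesis by simp
  qed
  have KC: "K / 2 \<le> C"
  proof -
    have "K / 2 = 2 powr (s / q - 1)" unfolding K_def by (simp add: powr_diff)
    also have "\<dots> \<le> 2 powr ((s - 1) / q)"
    proof (rule powr_mono)
      have "(s - 1) / q - (s / q - 1) = (q - 1) / q" using q0 by (simp add: field_simps)
      moreover have "(q - 1) / q \<ge> 0" using q by simp
      ultimately show "s / q - 1 \<le> (s - 1) / q" by linarith
    qed simp
    finally show ?thesis unfolding C_def .
  qed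
  have fg: "(\<lambda>t. f t * g t) integrable_on {a..b}"
    by (rule prod_int[OF fc g_int]) (use g_bounds in auto)
  have part1: "\<bar>integral {a..a+lam} f - integral {a..b} (\<lambda>t. f t * g t)\<bar>
           \<le> C * (lam\<^sup>2 * \<bar>f' (a + lam / 2)\<bar> + (b - a - lam)\<^sup>2 * \<bar>f' ((a + b + lam) / 2)\<bar>)"
  proof -
    define m where "m = a + lam"
    have am: "a \<le> m" "m \<le> b" using lam0 lamb unfolding m_def by auto
    define P where "P = (\<lambda>t::real. if t \<in> {a..m} then 1 else (0::real))"
    have fP: "(\<lambda>t. f t * P t) integrable_on {a..b}" unfolding P_def by (rule ind_facts(1)[OF order_refl am fc])
    have fPI: "integral {a..b} (\<lambda>t. f t * P t) = integral {a..m} f" unfolding P_def by (rule ind_facts(2)[OF order_refl am fc])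
    have c1: "continuous_on {a..b} (\<lambda>_. 1::real)" by simp
    have Pi: "P integrable_on {a..b}" using ind_facts(1)[OF order_refl am c1] unfolding P_def by simp
    have PI: "integral {a..b} P = m - a" using ind_facts(2)[OF order_refl am c1] am unfolding P_def by simp
    have comb: "integral {a..b} (\<lambda>t. (f t - f m) * (P t - g t)) = integral {a..m} f - integral {a..b} (\<lambda>t. f t * g t)"
      using combine_int[OF fP fg Pi g_int, of m] fPI PI unfolding lam_def m_def by simp
    have wi: "(\<lambda>t. P t - g t) integrable_on {a..b}" by (rule integrable_diff[OF Pi g_int])
    have wb: "\<forall>t\<in>{a..b}. \<bar>P t - g t\<bar> \<le> 1" using g_bounds unfolding P_def by auto
    have L1: "\<forall>t\<in>{a..m}. \<bar>f t - f m\<bar> \<le> (K * \<bar>f' (a + lam / 2)\<bar>) * (m - t)"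
      using lipR[of a _ m "a + lam / 2"] am unfolding m_def by (auto simp: abs_minus_commute)
    have L2: "\<forall>t\<in>{m..b}. \<bar>f t - f m\<bar> \<le> (K * \<bar>f' ((a + b + lam) / 2)\<bar>) * (t - m)"
      using lipL[of m _ b "(a + b + lam) / 2"] am unfolding m_def by auto
    have "\<bar>integral {a..b} (\<lambda>t. (f t - f m) * (P t - g t))\<bar>
          \<le> (K * \<bar>f' (a + lam / 2)\<bar>) * (m - a)^2 / 2 + (K * \<bar>f' ((a + b + lam) / 2)\<bar>) * (b - m)^2 / 2"
      by (rule int_bound[OF am fc wi wb L1 L2])
    also have "\<dots> = (K / 2) * (lam\<^sup>2 * \<bar>f' (a + lam / 2)\<bar> + (b - a - lam)\<^sup>2 * \<bar>f' ((a + b + lam) / 2)\<bar>)"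
      unfolding m_def by (simp add: algebra_simps)
    also have "\<dots> \<le> C * (lam\<^sup>2 * \<bar>f' (a + lam / 2)\<bar> + (b - a - lam)\<^sup>2 * \<bar>f' ((a + b + lam) / 2)\<bar>)"
      by (rule mult_right_mono[OF KC]) simp
    finally show ?thesis using comb unfolding m_def by simp
  qed
  have part2: "\<bar>integral {a..b} (\<lambda>t. f t * g t) - integral {b-lam..b} f\<bar>
           \<le> C * (lam\<^sup>2 * \<bar>f' (b - lam / 2)\<bar> + (b - a - lam)\<^sup>2 * \<bar>f' ((a + b - lam) / 2)\<bar>)"
  proof -
    define m where "m = b - lam"
    have am: "a \<le> m" "m \<le> b" using lam0 lamb unfolding m_def by auto
    define Q where "Q = (\<lambda>t::real. if t \<in> {m..b} then 1 else (0::real))"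
    have fQ: "(\<lambda>t. f t * Q t) integrable_on {a..b}" unfolding Q_def by (rule ind_facts(1)[OF am order_refl fc])
    have fQI: "integral {a..b} (\<lambda>t. f t * Q t) = integral {m..b} f" unfolding Q_def by (rule ind_facts(2)[OF am order_refl fc])
    have c1: "continuous_on {a..b} (\<lambda>_. 1::real)" by simp
    have Qi: "Q integrable_on {a..b}" using ind_facts(1)[OF am order_refl c1] unfolding Q_def by simp
    have QI: "integral {a..b} Q = b - m" using ind_facts(2)[OF am order_refl c1] am unfolding Q_def by simp
    have comb: "integral {a..b} (\<lambda>t. (f t - f m) * (g t - Q t)) = integral {a..b} (\<lambda>t. f t * g t) - integral {m..b} f"
      using combine_int[OF fg fQ g_int Qi, of m] fQI QI unfolding lam_def m_def by simp
    have wi: "(\<lambda>t. g t - Q t) integrable_on {a..b}" by (rule integrable_diff[OF g_int Qi])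
    have wb: "\<forall>t\<in>{a..b}. \<bar>g t - Q t\<bar> \<le> 1" using g_bounds unfolding Q_def by auto
    have L1: "\<forall>t\<in>{a..m}. \<bar>f t - f m\<bar> \<le> (K * \<bar>f' ((a + b - lam) / 2)\<bar>) * (m - t)"
      using lipR[of a _ m "(a + b - lam) / 2"] am unfolding m_def by (auto simp: abs_minus_commute)
    have L2: "\<forall>t\<in>{m..b}. \<bar>f t - f m\<bar> \<le> (K * \<bar>f' (b - lam / 2)\<bar>) * (t - m)"
      using lipL[of m _ b "b - lam / 2"] am unfolding m_def by auto
    have "\<bar>integral {a..b} (\<lambda>t. (f t - f m) * (g t - Q t))\<bar>
          \<le> (K * \<bar>f' ((a + b - lam) / 2)\<bar>) * (m - a)^2 / 2 + (K * \<bar>f' (b - lam / 2)\<bar>) * (b - m)^2 / 2"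
      by (rule int_bound[OF am fc wi wb L1 L2])
    also have "\<dots> = (K / 2) * (lam\<^sup>2 * \<bar>f' (b - lam / 2)\<bar> + (b - a - lam)\<^sup>2 * \<bar>f' ((a + b - lam) / 2)\<bar>)"
      unfolding m_def by (simp add: algebra_simps)
    also have "\<dots> \<le> C * (lam\<^sup>2 * \<bar>f' (b - lam / 2)\<bar> + (b - a - lam)\<^sup>2 * \<bar>f' ((a + b - lam) / 2)\<bar>)"
      by (rule mult_right_mono[OF KC]) simp
    finally show ?thesis using comb unfolding m_def by simp
  qed
  show ?thesis using part1 part2 unfolding C_def by blast
qed


end
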